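(* For every temporal graph with static graph $G=(V,E)$ and lifetime $T_{\max}$ and all $\delta,k$, there is an algorithm (strategy for the Discoverer) that wins the temporal graph discovery game in $|V|\,T_{\max}$ rounds.
   Context: A temporal graph $\mathcal G=(V,E,\lambda)$ with lifetime $T_{\max}$ consists of a finite undirected static graph $(V,E)$ and a labeling $\lambda:E\to\{1,\dots,T_{\max}\}$; edge $e$ is present only at time $\lambda(e)$. Infection model with parameter $\delta\in\mathbb N^+$: a set $S\subseteq V\times[0,T_{\max}]$ of seed infections is given; a seed $(u,t)$ makes $u$ infected at time $t$; otherwise a susceptible node $u$ becomes infected at time $t$ iff some neighbour $v$ infectious at time $t$ has $\lambda(uv)=t$ (exactly one infector recorded if several exist). A node infected at time $t$ is infectious at times $t+1,\dots,t+\delta$ and resistant afterwards. The infection log records triples $(u,v,t)$ ($u$ infected $v$ at time $t$; seeds as $(u,u,t)$). Temporal graph discovery game with parameters $T_{\max},\delta,k$: the Discoverer knows $V$ and $E$; each round it submits at most $k$ seed infections and the Adversary answers with an infection log consistent with the seeds under some labeling consistent with all previous answers (adaptively chosen). The Discoverer wins iff its final submitted labeling matches the Adversary's final labeling consistent with all logs, i.e. effectively iff the labeling is uniquely determined by the logs. *)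

theory Defs
  imports Main
begin

text \<open>A labeling maps edges to {1..Tmax}; to make
  labelings comparable by plain equality, it is required to be 0 off E.\<close>

definition static_graph :: "'a set \<Rightarrow> 'a set set \<Rightarrow> bool" where
  "static_graph V E \<longleftrightarrow> finite V \<and>
     (\<forall>e\<in>E. \<exists>u v. e = {u, v} \<and> u \<noteq> v \<and> u \<in> V \<and> v \<in> V)"

definition labeling :: "'a set set \<Rightarrow> nat \<Rightarrow> ('a set \<Rightarrow> nat) \<Rightarrow> bool" where
  "labeling E Tmax lam \<longleftrightarrow> (\<forall>e\<in>E. 1 \<le> lam e \<and> lam e \<le> Tmax) \<and> (\<forall>e. e \<notin> E \<longrightarrow> lam e = 0)"

type_synonym 'a seeds = "('a \<times> nat) set"
type_synonym 'a infection_log = "('a \<times> 'a \<times> nat) set"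

definition infectious :: "nat \<Rightarrow> 'a infection_log \<Rightarrow> 'a \<Rightarrow> nat \<Rightarrow> bool" where
  "infectious \<delta> L x t \<longleftrightarrow> (\<exists>y s. (y, x, s) \<in> L \<and> s < t \<and> t \<le> s + \<delta>)"

definition transmits ::
  "'a set set \<Rightarrow> ('a set \<Rightarrow> nat) \<Rightarrow> nat \<Rightarrow> 'a infection_log \<Rightarrow> 'a \<Rightarrow> 'a \<Rightarrow> nat \<Rightarrow> bool" where
  "transmits E lam \<delta> L x v t \<longleftrightarrow> {x, v} \<in> E \<and> lam {x, v} = t \<and> infectious \<delta> L x t"

definition eligible ::
  "'a set set \<Rightarrow> ('a set \<Rightarrow> nat) \<Rightarrow> nat \<Rightarrow> 'a seeds \<Rightarrow> 'a infection_log \<Rightarrow> 'a \<Rightarrow> nat \<Rightarrow> bool" where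
  "eligible E lam \<delta> S L v t \<longleftrightarrow> (v, t) \<in> S \<or> (\<exists>x. transmits E lam \<delta> L x v t)"

text \<open>L is an infection log of the process started by seeds S under labeling lam:
  every node is infected at most once, namely at the first time at which it is
  seeded or some infectious neighbour transmits to it along an edge present at
  that time; seeds are recorded as (u,u,t), other infections with one infector.\<close>
definition valid_log ::
  "'a set \<Rightarrow> 'a set set \<Rightarrow> nat \<Rightarrow> nat \<Rightarrow> ('a set \<Rightarrow> nat) \<Rightarrow> 'a seeds \<Rightarrow> 'a infection_log \<Rightarrow> bool" where
  "valid_log V E Tmax \<delta> lam S L \<longleftrightarrow>
     L \<subseteq> V \<times> V \<times> {0..Tmax}
   \<and> (\<forall>x y v t t'. (x, v, t) \<in> L \<and> (y, v, t') \<in> L \<longrightarrow> x = y \<and> t = t')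
   \<and> (\<forall>v\<in>V. \<forall>t\<le>Tmax. (\<exists>x. (x, v, t) \<in> L) \<longleftrightarrow>
          (eligible E lam \<delta> S L v t \<and> (\<forall>s<t. \<not> eligible E lam \<delta> S L v s)))
   \<and> (\<forall>x v t. (x, v, t) \<in> L \<longrightarrow>
          (if (v, t) \<in> S then x = v else transmits E lam \<delta> L x v t))"

definition consistent ::
  "'a set \<Rightarrow> 'a set set \<Rightarrow> nat \<Rightarrow> nat \<Rightarrow> ('a set \<Rightarrow> nat) \<Rightarrow> ('a seeds \<times> 'a infection_log) list \<Rightarrow> bool" where
  "consistent V E Tmax \<delta> lam H \<longleftrightarrow> labeling E Tmax lam \<and>
     (\<forall>(S, L) \<in> set H. valid_log V E Tmax \<delta> lam S L)"

definition seeds_ok :: "'a set \<Rightarrow> nat \<Rightarrow> nat \<Rightarrow> 'a seeds \<Rightarrow> bool" where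
  "seeds_ok V Tmax k S \<longleftrightarrow> finite S \<and> card S \<le> k \<and> S \<subseteq> V \<times> {0..Tmax}"

text \<open>A history H is a legal play against Discoverer strategy strat: in every round
  the submitted seeds are those prescribed by strat on the previous history, and the
  Adversary's answer (log) is consistent, together with all earlier answers, with
  some labeling (adaptive Adversary).\<close>
definition is_play ::
  "'a set \<Rightarrow> 'a set set \<Rightarrow> nat \<Rightarrow> nat \<Rightarrow> (('a seeds \<times> 'a infection_log) list \<Rightarrow> 'a seeds)
     \<Rightarrow> ('a seeds \<times> 'a infection_log) list \<Rightarrow> bool" where
  "is_play V E Tmax \<delta> strat H \<longleftrightarrow>
     (\<forall>i < length H. fst (H ! i) = strat (take i H) \<and>
        (\<exists>lam. consistent V E Tmax \<delta> lam (take (Suc i) H)))"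

text \<open>The Discoverer (strat, guess) wins the game within R rounds: on every legal
  play it only submits legal seed sets (at most k seeds), and after R rounds its
  guessed labeling equals every labeling consistent with all logs (i.e. whatever
  final labeling the Adversary picks).\<close>
definition wins_within ::
  "'a set \<Rightarrow> 'a set set \<Rightarrow> nat \<Rightarrow> nat \<Rightarrow> nat \<Rightarrow> nat
     \<Rightarrow> (('a seeds \<times> 'a infection_log) list \<Rightarrow> 'a seeds)
     \<Rightarrow> (('a seeds \<times> 'a infection_log) list \<Rightarrow> ('a set \<Rightarrow> nat)) \<Rightarrow> bool" where
  "wins_within V E Tmax \<delta> k R strat guess \<longleftrightarrow>
     (\<forall>H. is_play V E Tmax \<delta> strat H \<longrightarrow>
        (length H < R \<longrightarrow> seeds_ok V Tmax k (strat H)) \<and>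
        (length H = R \<longrightarrow> (\<forall>lam. consistent V E Tmax \<delta> lam H \<longrightarrow> guess H = lam)))"

end

theory Submission
  imports Defs
begin

lemma no_early:
  assumes vl: "valid_log V E Tmax \<delta> lam {(v,t0)} L"
  shows "(y,x,s) \<in> L \<Longrightarrow> t0 \<le> s"
proof (induction s arbitrary: y x rule: less_induct)
  case (less s)
  show ?case
  proof (rule ccontr)
    assume ns: "\<not> t0 \<le> s"
    from vl less.prems have xV: "x \<in> V" and sT: "s \<le> Tmax"
      unfolding valid_log_def by auto
    from vl xV sT less.prems have "eligible E lam \<delta> {(v,t0)} L x s"
      unfolding valid_log_def by blast
    then obtain w where "transmits E lam \<delta> L w x s"
      using ns unfolding eligible_def by auto
    then obtain y' s' where "(y', w, s') \<in> L" "s' < s"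
      unfolding transmits_def infectious_def by auto
    with less.IH[of s' y' w] ns show False by auto
  qed
qed

lemma not_infectious_early:
  assumes vl: "valid_log V E Tmax \<delta> lam {(v,t0)} L" and "t \<le> t0"
  shows "\<not> infectious \<delta> L x t"
  using no_early[OF vl] assms(2) unfolding infectious_def by fastforce

lemma key:
  assumes vl: "valid_log V E Tmax \<delta> lam {(v,t0)} L" and d: "\<delta> \<ge> 1"
    and vV: "v \<in> V" and uV: "u \<in> V" and uv: "u \<noteq> v" and eE: "{v,u} \<in> E"
    and T: "Suc t0 \<le> Tmax"
  shows "(\<exists>x. (x,u,Suc t0) \<in> L) \<longleftrightarrow> lam {v,u} = Suc t0"
proof -
  have ne: "\<And>x t. t \<le> t0 \<Longrightarrow> \<not> infectious \<delta> L x t"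
    using not_infectious_early[OF vl] by blast
  have iff: "\<forall>w\<in>V. \<forall>t\<le>Tmax. (\<exists>x. (x, w, t) \<in> L) \<longleftrightarrow>
          (eligible E lam \<delta> {(v,t0)} L w t \<and> (\<forall>s<t. \<not> eligible E lam \<delta> {(v,t0)} L w s))"
    using vl unfolding valid_log_def by blast
  have src: "\<forall>x w t. (x, w, t) \<in> L \<longrightarrow>
          (if (w, t) \<in> {(v,t0)} then x = w else transmits E lam \<delta> L x w t)"
    using vl unfolding valid_log_def by blast
  have vin: "(\<exists>x. (x, v, t0) \<in> L)"
  proof -
    have "eligible E lam \<delta> {(v,t0)} L v t0" unfolding eligible_def by simp
    moreover have "\<forall>s<t0. \<not> eligible E lam \<delta> {(v,t0)} L v s"
      using ne unfolding eligible_def transmits_def by auto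
    ultimately show ?thesis using iff vV T by auto
  qed
  have inf: "infectious \<delta> L x (Suc t0) \<longleftrightarrow> x = v" for x
  proof
    assume "infectious \<delta> L x (Suc t0)"
    then obtain y s where ys: "(y,x,s) \<in> L" "s < Suc t0" unfolding infectious_def by auto
    with no_early[OF vl] have "s = t0" by fastforce
    with ys src ne[of t0 y] show "x = v" unfolding transmits_def
      by (metis singletonD prod.inject order_refl)
  next
    assume "x = v"
    with vin d show "infectious \<delta> L x (Suc t0)" unfolding infectious_def
      by (metis add_le_mono1 le_add1 lessI plus_1_eq_Suc add.commute)
  qed
  have early: "\<forall>s<Suc t0. \<not> eligible E lam \<delta> {(v,t0)} L u s"
    using ne uv unfolding eligible_def transmits_def by auto
  have "eligible E lam \<delta> {(v,t0)} L u (Suc t0) \<longleftrightarrow> lam {v,u} = Suc t0"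
    using inf uv eE unfolding eligible_def transmits_def by auto
  then show ?thesis using iff uV T early by auto
qed

theorem mainTheorem4:
  fixes V :: "'a set" and E :: "'a set set" and Tmax \<delta> k :: nat
  assumes "static_graph V E" and "\<delta> \<ge> 1" and "k \<ge> 1"
  shows "\<exists>strat guess. wins_within V E Tmax \<delta> k (card V * Tmax) strat guess"
proof -
  have fin: "finite V" using assms(1) unfolding static_graph_def by auto
  obtain vs where vs: "set vs = V" "distinct vs" using finite_distinct_list[OF fin] by auto
  define ps where "ps = List.product vs [0..<Tmax]"
  have lps: "length ps = card V * Tmax"
    unfolding ps_def using vs distinct_card[of vs] by simp
  have sps: "set ps = V \<times> {0..<Tmax}" unfolding ps_def using vs by simp
  define strat :: "('a seeds \<times> 'a infection_log) list \<Rightarrow> 'a seeds" where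
    "strat = (\<lambda>H. if length H < length ps then {ps ! length H} else {})"
  define guess :: "('a seeds \<times> 'a infection_log) list \<Rightarrow> ('a set \<Rightarrow> nat)" where
    "guess = (\<lambda>H. SOME lam. consistent V E Tmax \<delta> lam H)"
  have uniq: "lam1 = lam2" if pl: "is_play V E Tmax \<delta> strat H" and len: "length H = card V * Tmax"
    and c1: "consistent V E Tmax \<delta> lam1 H" and c2: "consistent V E Tmax \<delta> lam2 H" for H lam1 lam2
  proof -
    have dir: "lam2 e = lam1 e" if c1: "consistent V E Tmax \<delta> lam1 H" and c2: "consistent V E Tmax \<delta> lam2 H"
      and eE: "e \<in> E" for lam1 lam2 e
    proof -
      obtain a b where ab: "e = {a,b}" "a \<noteq> b" "a \<in> V" "b \<in> V"
        using assms(1) eE unfolding static_graph_def by blast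
      have t: "1 \<le> lam1 e" "lam1 e \<le> Tmax" using c1 eE unfolding consistent_def labeling_def by auto
      define t0 where "t0 = lam1 e - 1"
      have "(a, t0) \<in> set ps" using sps ab t unfolding t0_def by auto
      then obtain i where i: "i < length ps" "ps ! i = (a, t0)" by (metis in_set_conv_nth)
      have iH: "i < length H" using i len lps by simp
      have "fst (H ! i) = strat (take i H)" using pl iH unfolding is_play_def by blast
      then have fs: "fst (H ! i) = {(a,t0)}" using i iH unfolding strat_def by simp
      obtain L where HL: "H ! i = ({(a,t0)}, L)" using fs by (metis prod.collapse)
      have mem: "({(a,t0)}, L) \<in> set H" using HL iH by (metis nth_mem)
      have v1: "valid_log V E Tmax \<delta> lam1 {(a,t0)} L" using c1 mem unfolding consistent_def by auto
      have v2: "valid_log V E Tmax \<delta> lam2 {(a,t0)} L" using c2 mem unfolding consistent_def by auto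
      have st: "Suc t0 = lam1 e" "Suc t0 \<le> Tmax" using t unfolding t0_def by auto
      have "\<exists>x. (x,b,Suc t0) \<in> L"
        using key[OF v1 assms(2) ab(3) ab(4)] ab eE st by auto
      then have "lam2 {a,b} = Suc t0"
        using key[OF v2 assms(2) ab(3) ab(4)] ab eE st by auto
      then show ?thesis using ab st by simp
    qed
    show ?thesis
    proof
      fix e
      show "lam1 e = lam2 e"
      proof (cases "e \<in> E")
        case True then show ?thesis using dir[OF c1 c2] by simp
      next
        case False then show ?thesis using c1 c2 unfolding consistent_def labeling_def by simp
      qed
    qed
  qed
  have "wins_within V E Tmax \<delta> k (card V * Tmax) strat guess"
    unfolding wins_within_def
  proof (intro allI impI conjI)
    fix H assume "is_play V E Tmax \<delta> strat H" "length H < card V * Tmax"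
    then have "strat H = {ps ! length H}" "ps ! length H \<in> set ps"
      unfolding strat_def using lps by auto
    then show "seeds_ok V Tmax k (strat H)"
      unfolding seeds_ok_def using sps assms(3) by auto
  next
    fix H lam assume pl: "is_play V E Tmax \<delta> strat H" and len: "length H = card V * Tmax"
      and c: "consistent V E Tmax \<delta> lam H"
    have "consistent V E Tmax \<delta> (guess H) H" unfolding guess_def using c by (metis someI)
    then show "guess H = lam" using uniq[OF pl len] c by blast
  qed
  then show ?thesis by blast
qed

end
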